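(* Let $\mathbf{k}$ be a field, $p\ge3$, $S=\mathbf{k}[e_1,\dots,e_{2p}]$, and let $\mathcal{F}$, $\mathcal{G}$ and $\varphi=(\varphi_i)_{i\ge0}:\mathcal{F}\to\mathcal{G}$ be as defined below. Then $\varphi$ is a map of chain complexes.
   Context: Let $V=\operatorname{span}_{\mathbf{k}}(e_1,\dots,e_{p-1})$, $W=\operatorname{span}_{\mathbf{k}}(e_{p+1},\dots,e_{2p-1})$; for $v\in V$ let $v'\in W$ be its image under $e_i\mapsto e_{p+i}$. For $U\in\{V,W\}$, $\partial^U:S\otimes\bigwedge^kU\to S\otimes\bigwedge^{k-1}U$ is $s\otimes u_1\wedge\cdots\wedge u_k\mapsto\sum_l(-1)^lsu_l\otimes u_1\wedge\cdots\widehat{u_l}\cdots\wedge u_k$. $\mathcal{F}$: $C_{a,b}=S\otimes\bigwedge^{a+2}V\otimes\bigwedge^bW$ ($a,b\ge0$), $\partial^h=\partial^V\otimes1:C_{a,b}\to C_{a-1,b}$ (zero if $a=0$), $\partial^v(s\otimes\omega\otimes w_1\wedge\cdots\wedge w_b)=(-1)^a\sum_l(-1)^lsw_l\otimes\omega\otimes w_1\wedge\cdots\widehat{w_l}\cdots\wedge w_b$; $\mathcal{F}_n=\bigoplus_{a+b=n}C_{a,b}$ with differential $\partial^h+\partial^v$. $\mathcal{G}$: for $i\ge1$, $M_i=(\bigwedge^iW\otimes W)/D_i$ where $D_i$ is spanned by $\sum_{l=1}^{i+1}(-1)^l(w_1\wedge\cdots\widehat{w_l}\cdots\wedge w_{i+1})\otimes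 w_l$; classes written $[\eta\otimes w]$. $\mathcal{G}_0=S$, $\mathcal{G}_i=S\otimes M_i$, differential $s\otimes[(w_1\wedge\cdots\wedge w_i)\otimes w]\mapsto\sum_l(-1)^lsw_l\otimes[(w_1\wedge\cdots\widehat{w_l}\cdots\wedge w_i)\otimes w]$ for $i\ge2$ and $s\otimes[w_1\otimes w]\mapsto-sw_1w$ for $i=1$ ($M_i\cong\mathbb{S}^{(2,1^{i-1})}W$; $\mathcal{G}$ resolves $S/\langle e_{p+1},\dots,e_{2p-1}\rangle^2$). $\varphi$: zero on $C_{a,b}$ for $a\ge1$; $\varphi_0(s\otimes v_1\wedge v_2)=s(v_1v_2'-v_2v_1')$ on $C_{0,0}$; $\varphi_i(s\otimes v_1\wedge v_2\otimes\eta)=sv_1\otimes[\eta\otimes v_2']-sv_2\otimes[\eta\otimes v_1']$ on $C_{0,i}$, $i\ge1$. *)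

theory Defs
  imports Main "HOL-Library.Poly_Mapping" "HOL-Library.Function_Algebras"
begin

text \<open>The polynomial ring k[e_i : i in nat]; S = k[e_1,...,e_2p] is the subring cut out by inS.\<close>
type_synonym 'k mpoly = "(nat \<Rightarrow>\<^sub>0 nat) \<Rightarrow>\<^sub>0 'k"

definition var :: "nat \<Rightarrow> 'k::field mpoly" where
  "var i = Poly_Mapping.single (Poly_Mapping.single i 1) 1"

definition mono_ok :: "nat \<Rightarrow> (nat \<Rightarrow>\<^sub>0 nat) \<Rightarrow> bool" where
  "mono_ok p m \<longleftrightarrow> Poly_Mapping.keys m \<subseteq> {1..2*p}"

definition inS :: "nat \<Rightarrow> 'k::field mpoly \<Rightarrow> bool" where
  "inS p s \<longleftrightarrow> (\<forall>m \<in> Poly_Mapping.keys s. mono_ok p m)"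

definition Vidx :: "nat \<Rightarrow> nat set" where "Vidx p = {1..p-1}"
definition Widx :: "nat \<Rightarrow> nat set" where "Widx p = {p+1..2*p-1}"

text \<open>Basis wedges e_A are taken with indices in increasing order; the sign (-1)^l of
  the l-th factor (l counted from 1).\<close>
definition sgn_at :: "nat set \<Rightarrow> nat \<Rightarrow> 'k::field mpoly" where
  "sgn_at A x = (-1) ^ Suc (card {y\<in>A. y < x})"

definition unitv :: "'b \<Rightarrow> 'r::zero \<Rightarrow> 'b \<Rightarrow> 'r" where
  "unitv b c = (\<lambda>b'. if b' = b then c else 0)"

definition scal :: "'r::times \<Rightarrow> ('b \<Rightarrow> 'r) \<Rightarrow> 'b \<Rightarrow> 'r" where
  "scal c f = (\<lambda>b. c * f b)"

text \<open>Complex F: basis element (A,B) stands for e_A (x) e_B in C_{a,b}, a = card A - 2, b = card B.\<close>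
definition Fall :: "nat \<Rightarrow> (nat set \<times> nat set) set" where
  "Fall p = Pow (Vidx p) \<times> Pow (Widx p)"

definition Fbasis :: "nat \<Rightarrow> nat \<Rightarrow> (nat set \<times> nat set) set" where
  "Fbasis p n = {(A,B). A \<subseteq> Vidx p \<and> B \<subseteq> Widx p \<and> 2 \<le> card A \<and> card A + card B = n + 2}"

definition dF_basis :: "nat set \<Rightarrow> nat set \<Rightarrow> nat set \<times> nat set \<Rightarrow> 'k::field mpoly" where
  "dF_basis A B =
     (if card A \<le> 2 then 0 else (\<Sum>x\<in>A. unitv (A - {x}, B) (sgn_at A x * var x)))
     + scal ((-1) ^ (card A - 2)) (\<Sum>y\<in>B. unitv (A, B - {y}) (sgn_at B y * var y))"

definition dF :: "nat \<Rightarrow> (nat set \<times> nat set \<Rightarrow> 'k::field mpoly) \<Rightarrow> nat set \<times> nat set \<Rightarrow> 'k mpoly" where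
  "dF p f = (\<Sum>(A,B)\<in>Fall p. scal (f (A,B)) (dF_basis A B))"

text \<open>Complex G: G_0 = S; an element of G_i (i>=1) is represented by an element of
  S (x) (wedge^i W (x) W), basis (B,j) = e_B (x) e_j, taken modulo S (x) D_i.\<close>
definition Gall :: "nat \<Rightarrow> (nat set \<times> nat) set" where
  "Gall p = Pow (Widx p) \<times> Widx p"

definition dG1 :: "nat \<Rightarrow> (nat set \<times> nat \<Rightarrow> 'k::field mpoly) \<Rightarrow> 'k mpoly" where
  "dG1 p g = (\<Sum>(B,j)\<in>Gall p. g (B,j) * (if card B = 1 then - (var (the_elem B) * var j) else 0))"

definition dG :: "nat \<Rightarrow> (nat set \<times> nat \<Rightarrow> 'k::field mpoly) \<Rightarrow> nat set \<times> nat \<Rightarrow> 'k mpoly" where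
  "dG p g = (\<Sum>(B,j)\<in>Gall p. scal (g (B,j)) (\<Sum>y\<in>B. unitv (B - {y}, j) (sgn_at B y * var y)))"

definition Dgen :: "nat set \<Rightarrow> nat set \<times> nat \<Rightarrow> 'k::field mpoly" where
  "Dgen C = (\<Sum>y\<in>C. unitv (C - {y}, y) (sgn_at C y))"

definition Dspan :: "nat \<Rightarrow> nat \<Rightarrow> (nat set \<times> nat \<Rightarrow> 'k::field mpoly) set" where
  "Dspan p i = {(\<Sum>C\<in>{C. C \<subseteq> Widx p \<and> card C = Suc i}. scal (c C) (Dgen C)) | c. \<forall>C. inS p (c C)}"

definition phi0 :: "nat \<Rightarrow> (nat set \<times> nat set \<Rightarrow> 'k::field mpoly) \<Rightarrow> 'k mpoly" where
  "phi0 p f = (\<Sum>(A,B)\<in>Fall p. f (A,B) *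
      (if card A = 2 \<and> B = {}
       then var (Min A) * var (Max A + p) - var (Max A) * var (Min A + p) else 0))"

definition phi_basis :: "nat \<Rightarrow> nat set \<Rightarrow> nat set \<Rightarrow> nat set \<times> nat \<Rightarrow> 'k::field mpoly" where
  "phi_basis p A B = (if card A = 2 \<and> B \<noteq> {}
      then unitv (B, Max A + p) (var (Min A)) - unitv (B, Min A + p) (var (Max A)) else 0)"

definition phi :: "nat \<Rightarrow> (nat set \<times> nat set \<Rightarrow> 'k::field mpoly) \<Rightarrow> nat set \<times> nat \<Rightarrow> 'k mpoly" where
  "phi p f = (\<Sum>(A,B)\<in>Fall p. scal (f (A,B)) (phi_basis p A B))"

end

theory Submission
  imports Defs
begin

lemma sum_fun_app: "(\<Sum>i\<in>I. F i) x = (\<Sum>i\<in>I. F i x)"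
  by (induction I rule: infinite_finite_induct) auto

definition LL :: "'b set \<Rightarrow> ('b \<Rightarrow> 'c \<Rightarrow> 'r::comm_ring_1) \<Rightarrow> ('b \<Rightarrow> 'r) \<Rightarrow> 'c \<Rightarrow> 'r" where
  "LL X K g = (\<Sum>b\<in>X. scal (g b) (K b))"

definition MM :: "'b set \<Rightarrow> ('b \<Rightarrow> 'r::comm_ring_1) \<Rightarrow> ('b \<Rightarrow> 'r) \<Rightarrow> 'r" where
  "MM X K g = (\<Sum>b\<in>X. g b * K b)"

lemma LL_sum: "LL X K (\<Sum>i\<in>I. g i) = (\<Sum>i\<in>I. LL X K (g i))"
  unfolding LL_def
  by (induction I rule: infinite_finite_induct)
     (auto simp: scal_def fun_eq_iff sum_fun_app distrib_right sum.distrib)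

lemma MM_sum: "MM X K (\<Sum>i\<in>I. g i) = (\<Sum>i\<in>I. MM X K (g i))"
  unfolding MM_def
  by (induction I rule: infinite_finite_induct)
     (auto simp: sum_fun_app distrib_right sum.distrib)

lemma LL_diff: "LL X K (g - h) = LL X K g - LL X K h"
  unfolding LL_def by (auto simp: scal_def fun_eq_iff sum_fun_app left_diff_distrib sum_subtractf)

lemma LL_scal: "LL X K (scal c g) = scal c (LL X K g)"
  unfolding LL_def by (auto simp: scal_def fun_eq_iff sum_fun_app sum_distrib_left mult.assoc)

lemma MM_scal: "MM X K (scal c g) = c * (MM X K g)"
  unfolding MM_def by (auto simp: scal_def sum_distrib_left mult.assoc)

lemma LL_unitv: "finite X \<Longrightarrow> LL X K (unitv b c) = (if b \<in> X then scal c (K b) else 0)"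
  unfolding LL_def unitv_def
  by (simp add: scal_def fun_eq_iff sum_fun_app if_distrib[of "\<lambda>u. u * _"] sum.delta' cong: if_cong)

lemma MM_unitv: "finite X \<Longrightarrow> MM X K (unitv b c) = (if b \<in> X then c * K b else 0)"
  unfolding MM_def unitv_def
  by (simp add: if_distrib[of "\<lambda>u. u * _"] sum.delta' cong: if_cong)

lemma dF_LL: "dF p = LL (Fall p) (\<lambda>b. dF_basis (fst b) (snd b))"
  unfolding dF_def LL_def by (auto simp: fun_eq_iff case_prod_beta')
lemma phi_LL: "phi p = LL (Fall p) (\<lambda>b. phi_basis p (fst b) (snd b))"
  unfolding phi_def LL_def by (auto simp: fun_eq_iff case_prod_beta')
lemma dG_LL: "dG p = LL (Gall p) (\<lambda>b. (\<Sum>y\<in>fst b. unitv (fst b - {y}, snd b) (sgn_at (fst b) y * var y)))"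
  unfolding dG_def LL_def by (auto simp: fun_eq_iff case_prod_beta')
lemma phi0_MM: "phi0 p = MM (Fall p) (\<lambda>b. if card (fst b) = 2 \<and> snd b = {}
       then var (Min (fst b)) * var (Max (fst b) + p) - var (Max (fst b)) * var (Min (fst b) + p) else 0)"
  unfolding phi0_def MM_def by (auto simp: fun_eq_iff case_prod_beta')
lemma dG1_MM: "dG1 p = MM (Gall p) (\<lambda>b. if card (fst b) = 1 then - (var (the_elem (fst b)) * var (snd b)) else 0)"
  unfolding dG1_def MM_def by (auto simp: fun_eq_iff case_prod_beta')

lemma finite_Fall: "finite (Fall p)" by (simp add: Fall_def Vidx_def Widx_def)
lemma finite_Gall: "finite (Gall p)" by (simp add: Gall_def Widx_def)

lemma MM_diff: "MM X K (g - h) = MM X K g - MM X K h"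
  unfolding MM_def by (auto simp: left_diff_distrib sum_subtractf)

lemma len3: "length xs = 3 \<Longrightarrow> \<exists>a b c. xs = [a,b,c]"
  by (auto simp: numeral_3_eq_3 length_Suc_conv)

lemma three:
  fixes A :: "nat set" assumes "card A = 3"
  obtains a b c where "A = {a,b,c}" "a<b" "b<c"
proof -
  have fin: "finite A" using assms card.infinite by force
  let ?l = "sorted_list_of_set A"
  have "length ?l = 3" by (simp add: assms)
  then have "\<exists>a b c. ?l = [a,b,c]" using len3 by blast
  then obtain a b c where l: "?l = [a,b,c]" by blast
  have "sorted_wrt (<) ?l" by simp
  moreover have "set ?l = A" using fin by simp
  ultimately show thesis using that l by auto
qed

lemma two_props:
  fixes A :: "nat set" assumes "card A = 2" "A \<subseteq> Vidx p"
  shows "Min A \<in> A" "Max A \<in> A" "Min A + p \<in> Widx p" "Max A + p \<in> Widx p" "finite A" "A \<noteq> {}"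
proof -
  show f: "finite A" using assms card.infinite by force
  show ne: "A \<noteq> {}" using assms by auto
  show "Min A \<in> A" "Max A \<in> A" using f ne by auto
  then have "Min A \<in> {1..p-1}" "Max A \<in> {1..p-1}" using assms(2) by (auto simp: Vidx_def)
  then show "Min A + p \<in> Widx p" "Max A + p \<in> Widx p"
    by (auto simp: Widx_def)
qed

lemma basis2:
  assumes A: "A \<subseteq> Vidx p" "card A = 2" and B: "B \<subseteq> Widx p" "2 \<le> card B"
  shows "phi p (dF_basis A B) = dG p (phi_basis p A B)"
proof -
  note tp = two_props[OF A(2,1)]
  have fB: "finite B" using B(1) finite_subset by (auto simp: Widx_def)
  have ne: "y \<in> B \<Longrightarrow> B - {y} \<noteq> {}" for y
  proof
    assume "y \<in> B" "B - {y} = {}"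
    then have "card (B - {y}) = card B - 1" using fB by (simp add: card_Diff_singleton)
    then show False using B(2) \<open>B - {y} = {}\<close> by simp
  qed
  have ne': "y \<in> B \<Longrightarrow> \<not> B \<subseteq> {y}" for y using ne by blast
  have d: "dF_basis A B = (\<Sum>y\<in>B. unitv (A, B - {y}) (sgn_at B y * var y))"
    unfolding dF_basis_def using A(2) by (simp add: scal_def)
  have inF: "y \<in> B \<Longrightarrow> (A, B - {y}) \<in> Fall p" for y using A B by (auto simp: Fall_def)
  have L: "phi p (dF_basis A B) = (\<Sum>y\<in>B. scal (sgn_at B y * var y)
      (unitv (B - {y}, Max A + p) (var (Min A)) - unitv (B - {y}, Min A + p) (var (Max A))))"
    unfolding d phi_LL LL_sum
    by (rule sum.cong, simp) (simp add: LL_unitv finite_Fall inF phi_basis_def A(2) ne ne')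
  have inG: "(B, Max A + p) \<in> Gall p" "(B, Min A + p) \<in> Gall p" using tp B by (auto simp: Gall_def)
  have R: "dG p (phi_basis p A B) = scal (var (Min A)) (\<Sum>y\<in>B. unitv (B - {y}, Max A + p) (sgn_at B y * var y))
     - scal (var (Max A)) (\<Sum>y\<in>B. unitv (B - {y}, Min A + p) (sgn_at B y * var y))"
    unfolding phi_basis_def using A(2) B(2) inG
    by (auto simp: dG_LL LL_diff LL_unitv finite_Gall)
  show ?thesis unfolding L R
    by (auto simp: fun_eq_iff sum_fun_app scal_def unitv_def sum_distrib_left sum_subtractf[symmetric]
        intro!: sum.cong)
qed

lemma LL_add: "LL X K (g + h) = LL X K g + LL X K h"
  unfolding LL_def by (auto simp: scal_def fun_eq_iff sum_fun_app distrib_right sum.distrib)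
lemma MM_add: "MM X K (g + h) = MM X K g + MM X K h"
  unfolding MM_def by (auto simp: distrib_right sum.distrib)
lemma LL_zero: "LL X K 0 = 0"
  unfolding LL_def by (auto simp: scal_def fun_eq_iff sum_fun_app)
lemma MM_zero: "MM X K 0 = 0"
  unfolding MM_def by auto
lemma MM_zero': "MM X K (\<lambda>b. 0) = 0"
  unfolding MM_def by auto

lemma sgn3:
  fixes a b c :: nat assumes "a < b" "b < c"
  shows "sgn_at {a,b,c} a = (-1::'k::field mpoly)" "sgn_at {a,b,c} b = (1::'k mpoly)" "sgn_at {a,b,c} c = (-1::'k mpoly)"
proof -
  have e1: "{y\<in>{a,b,c}. y<a} = {}" using assms by auto
  have e2: "{y\<in>{a,b,c}. y<b} = {a}" using assms by auto
  have e3: "{y\<in>{a,b,c}. y<c} = {a,b}" using assms by auto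
  have c3: "card {a,b} = 2" using assms by simp
  show "sgn_at {a,b,c} a = (-1::'k::field mpoly)" unfolding sgn_at_def e1 by simp
  show "sgn_at {a,b,c} b = (1::'k mpoly)" unfolding sgn_at_def e2 by simp
  show "sgn_at {a,b,c} c = (-1::'k mpoly)" unfolding sgn_at_def e3 c3 by simp
qed

lemma dF_basis_split:
  "dF_basis A B = (if card A \<le> 2 then 0 else (\<Sum>x\<in>A. unitv (A - {x}, B) (sgn_at A x * var x)))
     + scal ((-1) ^ (card A - 2)) (\<Sum>y\<in>B. unitv (A, B - {y}) (sgn_at B y * var y))"
  by (simp add: dF_basis_def)

lemma unitv_ob: "unitv P (u::'r::comm_ring_1) x = of_bool (x = P) * u"
  by (simp add: unitv_def)

lemma pb2: "(x::nat) < y \<Longrightarrow> B \<noteq> {} \<Longrightarrow> phi_basis p {x,y} B = unitv (B, y+p) (var x) - unitv (B, x+p) (var y)"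
  by (simp add: phi_basis_def min_def max_def)

lemma cancel3: "scal (- var a) (unitv (B, c+p) (var b) - unitv (B, b+p) (var c)) +
   (scal (var b) (unitv (B,c+p) (var a) - unitv (B,a+p) (var c)) +
   scal (- var c) (unitv (B,b+p) (var a) - unitv (B,a+p) (var b))) = (0 :: _ \<Rightarrow> 'k::field mpoly)"
proof (rule ext)
  fix x
  show "(scal (- var a) (unitv (B, c+p) (var b) - unitv (B, b+p) (var c)) +
   (scal (var b) (unitv (B,c+p) (var a) - unitv (B,a+p) (var c)) +
   scal (- var c) (unitv (B,b+p) (var a) - unitv (B,a+p) (var b)))) x = (0 :: _ \<Rightarrow> 'k::field mpoly) x"
    by (simp only: plus_fun_apply minus_apply scal_def unitv_ob zero_fun_apply) algebra
qed

lemma basis3a: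
  assumes A: "A \<subseteq> Vidx p" "card A = 3" and B: "B \<subseteq> Widx p" "B \<noteq> {}"
  shows "phi p (dF_basis A B) = 0"
proof -
  have inF: "y \<in> B \<Longrightarrow> (A, B - {y}) \<in> Fall p" for y using A B by (auto simp: Fall_def)
  have inF2: "x \<in> A \<Longrightarrow> (A - {x}, B) \<in> Fall p" for x using A B by (auto simp: Fall_def)
  have V: "phi p (\<Sum>y\<in>B. unitv (A, B - {y}) (sgn_at B y * var y)) = 0"
    unfolding phi_LL LL_sum
    by (rule sum.neutral) (simp add: LL_unitv finite_Fall inF phi_basis_def A(2) scal_def fun_eq_iff)
  have H: "phi p (\<Sum>x\<in>A. unitv (A - {x}, B) (sgn_at A x * var x))
      = (\<Sum>x\<in>A. scal (sgn_at A x * var x) (phi_basis p (A - {x}) B))"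
    unfolding phi_LL LL_sum
    by (rule sum.cong, simp) (simp add: LL_unitv finite_Fall inF2)
  obtain a b c where abc: "A = {a,b,c}" "a<b" "b<c" using three[OF A(2)] by blast
  have e: "{a,b,c} - {a} = {b,c}" "{a,b,c} - {b} = {a,c}" "{a,b,c} - {c} = {a,b}" using abc by auto
  have sp: "dF_basis A B = (\<Sum>x\<in>A. unitv (A - {x}, B) (sgn_at A x * var x))
     + scal ((-1) ^ (card A - 2)) (\<Sum>y\<in>B. unitv (A, B - {y}) (sgn_at B y * var y))"
    unfolding dF_basis_split using A(2) by simp
  have lin: "phi p (X + scal s Y) = phi p X + scal s (phi p Y)" for X Y s
    by (simp add: phi_LL LL_add LL_scal)
  have "phi p (dF_basis A B) = (\<Sum>x\<in>A. scal (sgn_at A x * var x) (phi_basis p (A - {x}) B))"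
    unfolding sp lin V H by (simp add: scal_def fun_eq_iff)
  also have "\<dots> = 0"
    unfolding abc(1) using abc(2,3) B(2)
    by (simp add: sgn3 e pb2 add.assoc cancel3 del: insert_Diff_if)
  finally show ?thesis .
qed

lemma basis3b:
  assumes A: "A \<subseteq> Vidx p" "card A = 3"
  shows "phi0 p (dF_basis A {}) = 0"
proof -
  have inF2: "x \<in> A \<Longrightarrow> (A - {x}, {}) \<in> Fall p" for x using A by (auto simp: Fall_def)
  obtain a b c where abc: "A = {a,b,c}" "a<b" "b<c" using three[OF A(2)] by blast
  have e: "{a,b,c} - {a} = {b,c}" "{a,b,c} - {b} = {a,c}" "{a,b,c} - {c} = {a,b}" using abc by auto
  have "phi0 p (dF_basis A {}) = (\<Sum>x\<in>A. (sgn_at A x * var x) *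
      (if card (A - {x}) = 2
       then var (Min (A - {x})) * var (Max (A - {x}) + p) - var (Max (A - {x})) * var (Min (A - {x}) + p) else 0))"
    unfolding dF_basis_split using A(2)
    by (simp add: phi0_MM MM_add MM_sum MM_scal MM_zero MM_zero' MM_unitv finite_Fall inF2 scal_def)
  also have "\<dots> = 0"
    unfolding abc(1) using abc(2,3)
    by (simp add: sgn3 e min_def max_def del: insert_Diff_if) (simp add: algebra_simps)
  finally show ?thesis .
qed

lemma basis_n1:
  assumes A: "A \<subseteq> Vidx p" "card A = 2" and w: "w \<in> Widx p"
  shows "phi0 p (dF_basis A {w} :: _ \<Rightarrow> 'k::field mpoly) = dG1 p (phi_basis p A {w})"
proof -
  note tp = two_props[OF A(2,1)]
  have inF: "(A, {}) \<in> Fall p" using A by (auto simp: Fall_def)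
  have inG: "({w}, Max A + p) \<in> Gall p" "({w}, Min A + p) \<in> Gall p" using tp w by (auto simp: Gall_def)
  have "{y. y = w \<and> y < w} = {}" by auto
  then have s: "(sgn_at {w} w :: 'k mpoly) * var w = - var w" unfolding sgn_at_def by (simp only: mem_Collect_eq singleton_iff) simp
  have "(dF_basis A {w} :: _ \<Rightarrow> 'k mpoly) = unitv (A, {}) (- var w)"
    unfolding dF_basis_def using A(2) s by (simp add: scal_def)
  then show ?thesis
    using A(2) inG inF
    by (simp add: phi0_MM dG1_MM MM_unitv MM_diff finite_Fall finite_Gall phi_basis_def)
       (simp add: algebra_simps)
qed

lemma basis4:
  assumes A: "A \<subseteq> Vidx p" "4 \<le> card A" and B: "B \<subseteq> Widx p"
  shows "phi p (dF_basis A B) = 0"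
proof -
  have fA: "finite A" using A(2) card.infinite by force
  have inF: "y \<in> B \<Longrightarrow> (A, B - {y}) \<in> Fall p" for y using A B by (auto simp: Fall_def)
  have inF2: "x \<in> A \<Longrightarrow> (A - {x}, B) \<in> Fall p" for x using A B by (auto simp: Fall_def)
  have c2: "x \<in> A \<Longrightarrow> card (A - {x}) \<noteq> 2" for x using A(2) fA by (simp add: card_Diff_singleton)
  have c2': "card A - Suc 0 \<noteq> 2" using A(2) by arith
  have V: "phi p (\<Sum>y\<in>B. unitv (A, B - {y}) (sgn_at B y * var y)) = 0"
    unfolding phi_LL LL_sum
    by (rule sum.neutral) (use A(2) in \<open>simp add: LL_unitv finite_Fall inF phi_basis_def scal_def fun_eq_iff\<close>)
  have H: "phi p (\<Sum>x\<in>A. unitv (A - {x}, B) (sgn_at A x * var x)) = 0"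
    unfolding phi_LL LL_sum
    by (rule sum.neutral) (use c2' in \<open>simp add: LL_unitv finite_Fall inF2 phi_basis_def c2 scal_def fun_eq_iff\<close>)
  have sp: "dF_basis A B = (\<Sum>x\<in>A. unitv (A - {x}, B) (sgn_at A x * var x))
     + scal ((-1) ^ (card A - 2)) (\<Sum>y\<in>B. unitv (A, B - {y}) (sgn_at B y * var y))"
    unfolding dF_basis_split using A(2) by simp
  have lin: "phi p (X + scal s Y) = phi p X + scal s (phi p Y)" for X Y s
    by (simp add: phi_LL LL_add LL_scal)
  show ?thesis unfolding sp lin V H by (simp add: scal_def fun_eq_iff)
qed

lemma zero_Dspan: "0 \<in> Dspan p i"
  unfolding Dspan_def
proof (rule CollectI, rule exI[of _ "\<lambda>C. 0"], intro conjI allI)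
  show "0 = (\<Sum>C\<in>{C. C \<subseteq> Widx p \<and> card C = Suc i}. scal ((\<lambda>C. 0) C) (Dgen C))"
    by (simp add: scal_def fun_eq_iff sum_fun_app)
  show "inS p ((\<lambda>C. 0::'a::field mpoly) C)" for C by (simp add: inS_def)
qed

lemma scal0: "scal 0 g = (0 :: _ \<Rightarrow> 'r::comm_ring_1)" by (simp add: scal_def fun_eq_iff)

theorem proposition7p8:
  fixes p n :: nat and f :: "nat set \<times> nat set \<Rightarrow> 'k::field mpoly"
  assumes "3 \<le> p" and "1 \<le> n"
    and "\<forall>\<beta>. f \<beta> \<noteq> 0 \<longrightarrow> \<beta> \<in> Fbasis p n"
    and "\<forall>\<beta>. inS p (f \<beta>)"
  shows "(n = 1 \<longrightarrow> phi0 p (dF p f) = dG1 p (phi p f))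
       \<and> (2 \<le> n \<longrightarrow> phi p (dF p f) - dG p (phi p f) \<in> Dspan p (n - 1))"
proof (intro conjI impI)
  have dFf: "dF p f = (\<Sum>\<beta>\<in>Fall p. scal (f \<beta>) (dF_basis (fst \<beta>) (snd \<beta>)))"
    by (simp add: dF_LL LL_def)
  have phif: "phi p f = (\<Sum>\<beta>\<in>Fall p. scal (f \<beta>) (phi_basis p (fst \<beta>) (snd \<beta>)))"
    by (simp add: phi_LL LL_def)
  {
    assume n1: "n = 1"
    have L: "phi0 p (dF p f) = (\<Sum>\<beta>\<in>Fall p. f \<beta> * phi0 p (dF_basis (fst \<beta>) (snd \<beta>)))"
      unfolding dFf by (simp only: phi0_MM MM_sum MM_scal)
    have R: "dG1 p (phi p f) = (\<Sum>\<beta>\<in>Fall p. f \<beta> * dG1 p (phi_basis p (fst \<beta>) (snd \<beta>)))"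
      unfolding phif by (simp only: dG1_MM MM_sum MM_scal)
    show "phi0 p (dF p f) = dG1 p (phi p f)"
      unfolding L R
    proof (rule sum.cong[OF refl])
      fix \<beta> assume "\<beta> \<in> Fall p"
      show "f \<beta> * phi0 p (dF_basis (fst \<beta>) (snd \<beta>)) = f \<beta> * dG1 p (phi_basis p (fst \<beta>) (snd \<beta>))"
      proof (cases "f \<beta> = 0")
        case False
        then have "\<beta> \<in> Fbasis p n" using assms(3) by blast
        then obtain A B where b: "\<beta> = (A,B)" "A \<subseteq> Vidx p" "B \<subseteq> Widx p" "2 \<le> card A" "card A + card B = 3"
          using n1 by (auto simp: Fbasis_def)
        have fB: "finite B" using b(3) finite_subset by (auto simp: Widx_def)
        show ?thesis
        proof (cases "card A = 2")
          case True
          then have "card B = 1" using b by simp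
          then obtain w where w: "B = {w}" by (auto simp: card_1_singleton_iff)
          then have "w \<in> Widx p" using b(3) by auto
          then have "phi0 p (dF_basis A {w}) = dG1 p (phi_basis p A {w} :: _ \<Rightarrow> 'k mpoly)"
            by (rule basis_n1[OF b(2) True])
          then show ?thesis using b(1) w by simp
        next
          case False
          then have c3: "card A = 3" using b by arith
          then have "card B = 0" using b by arith
          then have "B = {}" using fB by simp
          note c3 this
          moreover have "phi0 p (dF_basis A {} :: _ \<Rightarrow> 'k mpoly) = 0" by (rule basis3b[OF b(2) c3])
          ultimately show ?thesis using b(1)
            by (simp add: phi_basis_def dG1_MM MM_zero MM_zero' zero_fun_def)
        qed
      qed simp
    qed
  }
  {
    assume n2: "2 \<le> n"
    have L: "phi p (dF p f) = (\<Sum>\<beta>\<in>Fall p. scal (f \<beta>) (phi p (dF_basis (fst \<beta>) (snd \<beta>))))"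
      unfolding dFf by (simp only: phi_LL[of p] LL_sum LL_scal)
    have R: "dG p (phi p f) = (\<Sum>\<beta>\<in>Fall p. scal (f \<beta>) (dG p (phi_basis p (fst \<beta>) (snd \<beta>))))"
      unfolding phif by (simp only: dG_LL LL_sum LL_scal)
    have "phi p (dF p f) = dG p (phi p f)"
      unfolding L R
    proof (rule sum.cong[OF refl])
      fix \<beta> assume "\<beta> \<in> Fall p"
      show "scal (f \<beta>) (phi p (dF_basis (fst \<beta>) (snd \<beta>))) = scal (f \<beta>) (dG p (phi_basis p (fst \<beta>) (snd \<beta>)))"
      proof (cases "f \<beta> = 0")
        case False
        then have "\<beta> \<in> Fbasis p n" using assms(3) by blast
        then obtain A B where b: "\<beta> = (A,B)" "A \<subseteq> Vidx p" "B \<subseteq> Widx p" "2 \<le> card A" "card A + card B = n + 2"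
          by (auto simp: Fbasis_def)
        have fB: "finite B" using b(3) finite_subset by (auto simp: Widx_def)
        have pb0: "card A \<noteq> 2 \<Longrightarrow> dG p (phi_basis p A B :: _ \<Rightarrow> 'k mpoly) = 0"
          by (simp add: phi_basis_def dG_LL LL_zero)
        consider "card A = 2" | "card A = 3" | "4 \<le> card A" using b(4) by linarith
        then show ?thesis
        proof cases
          case 1
          have "2 \<le> card B" using b n2 1 by simp
          then have "phi p (dF_basis A B) = dG p (phi_basis p A B :: _ \<Rightarrow> 'k mpoly)"
            by (rule basis2[OF b(2) 1 b(3)])
          then show ?thesis using b(1) by simp
        next
          case 2
          then have "B \<noteq> {}" using b n2 by auto
          then have "phi p (dF_basis A B :: _ \<Rightarrow> 'k mpoly) = 0" by (rule basis3a[OF b(2) 2 b(3)])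
          then show ?thesis using pb0 2 b(1) by simp
        next
          case 3
          have "phi p (dF_basis A B :: _ \<Rightarrow> 'k mpoly) = 0" by (rule basis4[OF b(2) 3 b(3)])
          then show ?thesis using pb0 3 b(1) by simp
        qed
      qed (simp add: scal0)
    qed
    then show "phi p (dF p f) - dG p (phi p f) \<in> Dspan p (n - 1)" by (simp add: zero_Dspan)
  }
qed

end
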